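(* Let $n>1$ and $m\in\mathbb{N}$, let $\mathcal{Q}_m=\bigoplus_{t=0}^mH_t\subseteq H^2(\mathbb{T}^n)$, and let $p=\sum_{|k|=m}a_kz^k\in H_m$ be a homogeneous polynomial of degree $m$ with $\|p\|_2=1$. If $a_k\neq0$ and $a_l\neq0$ for some $k\neq l$ in $\mathbb{Z}_+^n$, then $S_p=P_{\mathcal{Q}_m}T_p|_{\mathcal{Q}_m}$ is not liftable, i.e. there is no $\varphi\in\mathcal{S}(\mathbb{D}^n)$ with $S_p=P_{\mathcal{Q}_m}T_\varphi|_{\mathcal{Q}_m}$.
   Context: $H_t$ is the space of homogeneous polynomials of degree $t$ in $z_1,\dots,z_n$, viewed inside the Hardy space $H^2(\mathbb{T}^n)$ with norm $\|\cdot\|_2$; $|k|=k_1+\dots+k_n$. $T_\varphi f=\varphi f$, $P_{\mathcal{Q}_m}$ the orthogonal projection onto $\mathcal{Q}_m$, $\mathcal{S}(\mathbb{D}^n)$ the closed unit ball of $H^\infty(\mathbb{D}^n)$. *)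

theory Defs
  imports "HOL-Analysis.Analysis"
begin

text \<open>Multi-indices in Z_+^n are functions 'n => nat over a finite index type 'n
 (CARD('n) = n). Elements of H^2(T^n) / H^infty(D^n) are represented by their
 Taylor coefficient families ('n => nat) => complex.\<close>

definition mdeg :: "('n::finite \<Rightarrow> nat) \<Rightarrow> nat" where
  "mdeg k = (\<Sum>i\<in>UNIV. k i)"

definition Qspace :: "nat \<Rightarrow> (('n::finite \<Rightarrow> nat) \<Rightarrow> complex) set" where
  "Qspace m = {f. \<forall>k. m < mdeg k \<longrightarrow> f k = 0}"

definition Hhom :: "nat \<Rightarrow> (('n::finite \<Rightarrow> nat) \<Rightarrow> complex) set" where
  "Hhom m = {f. \<forall>k. mdeg k \<noteq> m \<longrightarrow> f k = 0}"

definition h2norm_poly :: "nat \<Rightarrow> (('n::finite \<Rightarrow> nat) \<Rightarrow> complex) \<Rightarrow> real" where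
  "h2norm_poly m f = sqrt (\<Sum>k\<in>{k. mdeg k \<le> m}. (cmod (f k))\<^sup>2)"

definition monom_val :: "('n::finite \<Rightarrow> complex) \<Rightarrow> ('n \<Rightarrow> nat) \<Rightarrow> complex" where
  "monom_val z k = (\<Prod>i\<in>UNIV. z i ^ k i)"

text \<open>Schur class S(D^n): holomorphic functions on the open polydisc (given by their
 power series, which converges absolutely on D^n) with sup norm at most 1.\<close>
definition schur_class :: "(('n::finite \<Rightarrow> nat) \<Rightarrow> complex) \<Rightarrow> bool" where
  "schur_class c \<longleftrightarrow> (\<forall>z::'n \<Rightarrow> complex. (\<forall>i. cmod (z i) < 1) \<longrightarrow>
      (\<lambda>k. cmod (c k * monom_val z k)) summable_on UNIV \<and>
      cmod (infsum (\<lambda>k. c k * monom_val z k) UNIV) \<le> 1)"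

definition mult_coeff :: "(('n::finite \<Rightarrow> nat) \<Rightarrow> complex) \<Rightarrow> (('n \<Rightarrow> nat) \<Rightarrow> complex)
    \<Rightarrow> ('n \<Rightarrow> nat) \<Rightarrow> complex" where
  "mult_coeff c f k = (\<Sum>j\<in>{j. \<forall>i. j i \<le> k i}. c j * f (\<lambda>i. k i - j i))"

text \<open>P_{Q_m} T_c |_{Q_m} = P_{Q_m} T_d |_{Q_m}, as equality of coefficient families.\<close>
definition same_compression :: "nat \<Rightarrow> (('n::finite \<Rightarrow> nat) \<Rightarrow> complex)
    \<Rightarrow> (('n \<Rightarrow> nat) \<Rightarrow> complex) \<Rightarrow> bool" where
  "same_compression m c d \<longleftrightarrow> (\<forall>f \<in> Qspace m. \<forall>k. mdeg k \<le> m \<longrightarrow>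
      mult_coeff c f k = mult_coeff d f k)"

end

theory Submission
  imports Defs "HOL-Complex_Analysis.Complex_Analysis"
begin

lemma finite_box: "finite {j::'n::finite \<Rightarrow> nat. \<forall>i. j i \<le> k i}"
proof -
  have "{j::'n \<Rightarrow> nat. \<forall>i. j i \<le> k i} \<subseteq> Pi\<^sub>E UNIV (\<lambda>i. {..k i})"
    by (auto simp: PiE_UNIV_domain)
  moreover have "finite (Pi\<^sub>E (UNIV::'n set) (\<lambda>i. {..k i}))"
    by (rule finite_PiE) auto
  ultimately show ?thesis by (rule finite_subset)
qed

lemma le_mdeg: "k i \<le> mdeg k"
  unfolding mdeg_def by (rule member_le_sum) auto

lemma finite_mdeg_le: "finite {k::'n::finite \<Rightarrow> nat. mdeg k \<le> m}"
proof -
  have "{k::'n \<Rightarrow> nat. mdeg k \<le> m} \<subseteq> {j. \<forall>i. j i \<le> m}"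
  proof
    fix k :: "'n \<Rightarrow> nat" assume "k \<in> {k. mdeg k \<le> m}"
    then have "mdeg k \<le> m" by simp
    then have "\<forall>i. k i \<le> m" using le_mdeg[of k] le_trans by blast
    then show "k \<in> {j. \<forall>i. j i \<le> m}" by simp
  qed
  moreover have "finite {j::'n \<Rightarrow> nat. \<forall>i. j i \<le> m}" using finite_box[of "\<lambda>_. m"] by simp
  ultimately show ?thesis by (rule finite_subset)
qed

lemma finite_mdeg_eq: "finite {k::'n::finite \<Rightarrow> nat. mdeg k = m}"
  by (rule finite_subset[OF _ finite_mdeg_le[of m]]) (simp add: subset_iff)


lemma mdeg_zero: "mdeg (\<lambda>_. 0) = 0"
  unfolding mdeg_def by simp

lemma coef_eq:
  fixes a c :: "('n::finite \<Rightarrow> nat) \<Rightarrow> complex"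
  assumes "same_compression m a c" "mdeg k \<le> m"
  shows "c k = a k"
proof -
  define f :: "('n \<Rightarrow> nat) \<Rightarrow> complex" where "f = (\<lambda>j. if j = (\<lambda>_. 0) then 1 else 0)"
  have fQ: "f \<in> Qspace m"
    unfolding Qspace_def
  proof (intro CollectI allI impI)
    fix j :: "'n \<Rightarrow> nat" assume "m < mdeg j"
    then have "j \<noteq> (\<lambda>_. 0)" using mdeg_zero by (metis not_less0)
    then show "f j = 0" unfolding f_def by simp
  qed
  have mc: "mult_coeff d f k = d k" for d :: "('n \<Rightarrow> nat) \<Rightarrow> complex"
  proof -
    have eq: "d j * f (\<lambda>i. k i - j i) = (if j = k then d k else 0)" if j: "\<forall>i. j i \<le> k i" for j
    proof (cases "j = k")
      case True then show ?thesis by (simp add: f_def)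
    next
      case False
      then obtain i where i: "j i \<noteq> k i" by (meson ext)
      then have "k i - j i \<noteq> 0" using j by (metis diff_is_0_eq le_antisym)
      then have "(\<lambda>i. k i - j i) \<noteq> (\<lambda>_. 0)" by metis
      then show ?thesis using False by (simp add: f_def)
    qed
    have "mult_coeff d f k = (\<Sum>j\<in>{j. \<forall>i. j i \<le> k i}. if j = k then d k else 0)"
      unfolding mult_coeff_def by (rule sum.cong[OF refl], rule eq, simp)
    also have "\<dots> = d k" by (subst sum.delta[OF finite_box]) simp
    finally show ?thesis .
  qed
  have "mult_coeff a f k = mult_coeff c f k"
    using assms(1) fQ assms(2) unfolding same_compression_def by blast
  then show ?thesis using mc[of a] mc[of c] by simp
qed


lemma monom_scale: "monom_val (\<lambda>i. z * w i) k = z ^ mdeg k * monom_val w k"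
  unfolding monom_val_def mdeg_def by (simp add: power_mult_distrib prod.distrib power_sum)

lemma slice_sums:
  fixes c :: "('n::finite \<Rightarrow> nat) \<Rightarrow> complex"
  assumes "(\<lambda>k. c k * monom_val (\<lambda>i. z * w i) k) summable_on UNIV"
  shows "(\<lambda>t. (\<Sum>k\<in>{k. mdeg k = t}. c k * monom_val w k) * z^t) sums
           infsum (\<lambda>k. c k * monom_val (\<lambda>i. z * w i) k) UNIV"
proof -
  define f where "f = (\<lambda>k. c k * monom_val (\<lambda>i. z * w i) k)"
  define T where "T = Sigma (UNIV::nat set) (\<lambda>t. {k::'n \<Rightarrow> nat. mdeg k = t})"
  have hs: "(f has_sum infsum f UNIV) UNIV" using assms f_def by simp
  have "(f has_sum infsum f UNIV) UNIV = ((\<lambda>p. f (snd p)) has_sum infsum f UNIV) T"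
    by (rule has_sum_reindex_bij_witness[where i = snd and j = "\<lambda>k. (mdeg k, k)"])
       (auto simp: T_def)
  with hs have hT: "((\<lambda>p. f (snd p)) has_sum infsum f UNIV) T" by simp
  have "((\<lambda>t. \<Sum>k\<in>{k. mdeg k = t}. f k) has_sum infsum f UNIV) UNIV"
    by (rule has_sum_SigmaD[OF hT[unfolded T_def]]) (auto intro: has_sum_finite finite_mdeg_eq)
  moreover have "(\<Sum>k\<in>{k. mdeg k = t}. f k) = (\<Sum>k\<in>{k. mdeg k = t}. c k * monom_val w k) * z^t" for t
    unfolding f_def monom_scale sum_distrib_right
    by (rule sum.cong) (auto simp: algebra_simps)
  ultimately show ?thesis using has_sum_imp_sums f_def by auto
qed

lemma slice_bound:
  fixes c :: "('n::finite \<Rightarrow> nat) \<Rightarrow> complex"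
  assumes sc: "schur_class c" and c0: "\<And>k. mdeg k < m \<Longrightarrow> c k = 0"
    and w1: "\<And>i. cmod (w i) = 1"
  shows "cmod (\<Sum>k\<in>{k. mdeg k = m}. c k * monom_val w k) \<le> 1"
proof -
  define G where "G t = (\<Sum>k\<in>{k. mdeg k = t}. c k * monom_val w k)" for t
  define g where "g z = infsum (\<lambda>k. c k * monom_val (\<lambda>i. z * w i) k) UNIV" for z
  have sch: "(\<lambda>k. c k * monom_val (\<lambda>i. z * w i) k) summable_on UNIV \<and> cmod (g z) \<le> 1"
    if "norm z < 1" for z
  proof -
    have "\<forall>i. cmod (z * w i) < 1" using that w1 by (simp add: norm_mult)
    then have "(\<lambda>k. cmod (c k * monom_val (\<lambda>i. z * w i) k)) summable_on UNIV \<and>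
      cmod (infsum (\<lambda>k. c k * monom_val (\<lambda>i. z * w i) k) UNIV) \<le> 1"
      using sc[unfolded schur_class_def, rule_format, of "\<lambda>i. z * w i"] by simp
    then show ?thesis unfolding g_def
      using abs_summable_summable[of "\<lambda>k. c k * monom_val (\<lambda>i. z * w i) k" UNIV] by auto
  qed
  have gs: "(\<lambda>t. G t * z^t) sums g z" if "norm z < 1" for z
    unfolding G_def g_def using slice_sums sch[OF that] by blast
  have G0: "G t = 0" if "t < m" for t
    unfolding G_def using c0 that by (intro sum.neutral) auto
  define h where "h z = suminf (\<lambda>t. G (t+m) * z^t)" for z
  have hs: "(\<lambda>t. G (t+m) * z^t) sums h z \<and> (z \<noteq> 0 \<longrightarrow> h z = g z / z^m)"
    if "norm z < 1" for z
  proof (cases "z = 0")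
    case True
    then show ?thesis unfolding h_def using powser_sums_zero[of "\<lambda>t. G (t+m)"]
      by (metis sums_summable summable_sums)
  next
    case False
    have "(\<lambda>t. G (t+m) * z^(t+m)) sums (g z - (\<Sum>i<m. G i * z^i))"
      using sums_split_initial_segment[OF gs[OF that], of m] by simp
    also have "(\<Sum>i<m. G i * z^i) = 0" using G0 by simp
    finally have "(\<lambda>t. G (t+m) * z^(t+m) / z^m) sums (g z / z^m)"
      by (intro sums_divide) simp
    moreover have "G (t+m) * z^(t+m) / z^m = G (t+m) * z^t" for t
      using False by (simp add: power_add)
    ultimately have s: "(\<lambda>t. G (t+m) * z^t) sums (g z / z^m)" by simp
    then have "h z = g z / z^m" unfolding h_def by (rule sums_unique[symmetric])
    with s False show ?thesis by simp
  qed
  have hol: "h holomorphic_on ball 0 1"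
    by (rule power_series_holomorphic[where a = "\<lambda>t. G (t+m)"]) (use hs in auto)
  have h0: "h 0 = G m"
    using hs[of 0] powser_sums_zero[of "\<lambda>t. G (t+m)"] sums_unique2 by force
  have bound: "cmod (G m) * \<rho>^m \<le> 1" if "0 < \<rho>" "\<rho> < 1" for \<rho> :: real
  proof -
    have sub: "cball 0 \<rho> \<subseteq> ball (0::complex) 1" using that by auto
    have "norm ((deriv ^^ 0) h 0) \<le> (fact 0) * (1/\<rho>^m) / \<rho>^0"
    proof (rule Cauchy_inequality)
      show "h holomorphic_on ball 0 \<rho>" by (rule holomorphic_on_subset[OF hol]) (use that in auto)
      show "continuous_on (cball 0 \<rho>) h"
        using holomorphic_on_imp_continuous_on[OF hol] sub by (rule continuous_on_subset)
      show "0 < \<rho>" by fact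
      fix x :: complex assume x: "norm (0 - x) = \<rho>"
      then have nx: "norm x = \<rho>" by simp
      with that have "x \<noteq> 0" "norm x < 1" by auto
      then have "h x = g x / x^m" using hs by blast
      then have "norm (h x) = norm (g x) / \<rho>^m" using nx by (simp add: norm_divide norm_power)
      also have "\<dots> \<le> 1 / \<rho>^m" using sch[OF \<open>norm x < 1\<close>] that
        by (intro divide_right_mono) auto
      finally show "norm (h x) \<le> 1 / \<rho>^m" .
    qed
    then have "cmod (G m) \<le> 1 / \<rho>^m" using h0 by simp
    then show ?thesis using that by (simp add: field_simps)
  qed
  have lim: "((\<lambda>\<rho>::real. cmod (G m) * \<rho>^m) \<longlongrightarrow> cmod (G m) * 1^m) (at_left 1)"
    by (intro tendsto_intros)
  have ev: "eventually (\<lambda>\<rho>::real. cmod (G m) * \<rho>^m \<le> 1) (at_left 1)"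
    using eventually_at_left_real[of 0 "1::real"] by (rule eventually_mono) (use bound in auto)
  have "cmod (G m) * 1^m \<le> 1"
    using tendsto_upperbound[OF lim ev] by simp
  then show ?thesis unfolding G_def by simp
qed

lemma digits_lt: "(\<forall>r<n. d r < (N::nat)) \<Longrightarrow> (\<Sum>r<n. d r * N^r) < N^n"
proof (induction n)
  case 0 show ?case by simp
next
  case (Suc n)
  have S: "(\<Sum>r<n. d r * N^r) < N^n" using Suc by auto
  have d: "d n + 1 \<le> N" using Suc.prems by auto
  have "(\<Sum>r<Suc n. d r * N^r) = (\<Sum>r<n. d r * N^r) + d n * N^n" by simp
  also have "\<dots> < N^n + d n * N^n" using S by simp
  also have "\<dots> = (d n + 1) * N^n" by simp
  also have "\<dots> \<le> N * N^n" using d by (intro mult_right_mono) auto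
  finally show ?case by simp
qed

lemma digits_inj: "(\<forall>r<n. d r < (N::nat)) \<Longrightarrow> (\<forall>r<n. d' r < N) \<Longrightarrow>
   (\<Sum>r<n. d r * N^r) = (\<Sum>r<n. d' r * N^r) \<Longrightarrow> \<forall>r<n. d r = d' r"
proof (induction n)
  case 0 show ?case by simp
next
  case (Suc n)
  let ?S = "\<Sum>r<n. d r * N^r" let ?S' = "\<Sum>r<n. d' r * N^r"
  have lt: "?S < N^n" "?S' < N^n" using digits_lt Suc.prems by auto
  have eq: "?S + d n * N^n = ?S' + d' n * N^n" using Suc.prems(3) by simp
  have Npos: "N > 0" using Suc.prems(1) by auto
  then have pos: "N^n > 0" by simp
  have "(?S + d n * N^n) mod N^n = ?S" using lt by simp
  moreover have "(?S' + d' n * N^n) mod N^n = ?S'" using lt by simp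
  ultimately have SS: "?S = ?S'" using eq by metis
  then have "d n * N^n = d' n * N^n" using eq by simp
  then have dn: "d n = d' n" using Npos by simp
  have "\<forall>r<n. d r = d' r" using Suc.IH Suc.prems SS by auto
  then show ?case using dn less_Suc_eq by auto
qed

lemma char_sum:
  fixes M :: nat and x :: int
  assumes M: "M > 0" and x: "\<bar>x\<bar> < int M"
  shows "(\<Sum>j<M. cis (2*pi*real j* of_int x/real M)) = (if x = 0 then of_nat M else 0)"
proof (cases "x = 0")
  case True then show ?thesis by simp
next
  case False
  define \<omega> where "\<omega> = cis (2*pi* of_int x/real M)"
  have pw: "cis (2*pi*real j* of_int x/real M) = \<omega>^j" for j
    unfolding \<omega>_def Complex.DeMoivre by (simp add: mult_ac)
  have "\<omega>^M = cis (real M * (2*pi* of_int x/real M))" unfolding \<omega>_def Complex.DeMoivre ..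
  also have "real M * (2*pi* of_int x/real M) = 2*pi* of_int x" using M by simp
  also have "cis (2*pi* of_int x) = 1" by (rule cis_multiple_2pi) simp
  finally have wM: "\<omega>^M = 1" .
  have w1: "\<omega> \<noteq> 1"
  proof
    assume "\<omega> = 1"
    then have "exp (\<i> * complex_of_real (2*pi* of_int x/real M)) = 1"
      unfolding \<omega>_def cis_conv_exp .
    then obtain n :: int where n: "2*pi* of_int x/real M = of_int (2*n) * pi"
      unfolding exp_eq_1 by auto
    then have "of_int x = real_of_int n * real M" using M by (simp add: field_simps)
    then have xn: "x = n * int M" by (metis of_int_eq_iff of_int_mult of_int_of_nat_eq)
    show False
    proof (cases "n = 0")
      case True then show False using xn False by simp
    next
      case nz: False
      have "\<bar>x\<bar> = \<bar>n\<bar> * int M" using xn by (simp add: abs_mult)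
      also have "\<dots> \<ge> 1 * int M" using nz by (intro mult_right_mono) auto
      finally show False using x by simp
    qed
  qed
  have "(\<Sum>j<M. cis (2*pi*real j* of_int x/real M)) = (\<Sum>j<M. \<omega>^j)" using pw by simp
  also have "\<dots> = (\<omega>^M - 1) / (\<omega> - 1)" using geometric_sum[OF w1] .
  also have "\<dots> = 0" using wM by simp
  finally show ?thesis using False by simp
qed

lemma no_unimodular:
  fixes a :: "('n::finite \<Rightarrow> nat) \<Rightarrow> complex" and K :: "('n \<Rightarrow> nat) set"
  assumes K: "finite K" and Kb: "\<And>k i. k \<in> K \<Longrightarrow> k i \<le> m"
    and norm1: "(\<Sum>k\<in>K. (cmod (a k))^2) = 1"
    and kl: "k \<in> K" "l \<in> K" "k \<noteq> l" "a k \<noteq> 0" "a l \<noteq> 0"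
    and bd: "\<And>w. (\<forall>i. cmod (w i) = 1) \<Longrightarrow> cmod (\<Sum>k\<in>K. a k * monom_val w k) \<le> 1"
  shows False
proof -
  define n where "n = CARD('n)"
  obtain g where g: "bij_betw g (UNIV::'n set) {0..<n}"
    using ex_bij_betw_finite_nat[of "UNIV::'n set"] n_def by auto
  define h where "h = inv_into UNIV g"
  have h: "bij_betw h {0..<n} UNIV" using bij_betw_inv_into[OF g] h_def by simp
  have gh: "g (h r) = r" if "r < n" for r
    using bij_betw_inv_into_right[OF g] that h_def by simp
  have hg: "h (g i) = i" for i
    using bij_betw_inv_into_left[OF g] h_def by simp
  have gn: "g i < n" for i using g by (auto simp: bij_betw_def)
  define N where "N = Suc m"
  define E where "E k = (\<Sum>i\<in>UNIV. k i * N^(g i))" for k :: "'n \<Rightarrow> nat"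
  have Eh: "E k = (\<Sum>r<n. k (h r) * N^r)" for k
  proof -
    have "(\<Sum>r\<in>{0..<n}. k (h r) * N^(g (h r))) = E k"
      unfolding E_def by (rule sum.reindex_bij_betw[OF h])
    moreover have "(\<Sum>r\<in>{0..<n}. k (h r) * N^(g (h r))) = (\<Sum>r\<in>{0..<n}. k (h r) * N^r)"
      by (rule sum.cong) (auto simp: gh)
    ultimately show ?thesis by (simp add: atLeast0LessThan)
  qed
  have Einj: "inj_on E K"
  proof (rule inj_onI)
    fix k k' assume k: "k \<in> K" and k': "k' \<in> K" and e: "E k = E k'"
    have "\<forall>r<n. k (h r) = k' (h r)"
      by (rule digits_inj[where N = N]) (use Kb k k' e Eh N_def in \<open>auto simp: less_Suc_eq_le\<close>)
    then have "k (h (g i)) = k' (h (g i))" for i using gn by blast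
    then show "k = k'" using hg by (auto simp: fun_eq_iff)
  qed
  have mon: "monom_val (\<lambda>i. \<zeta> ^ (N^(g i))) k = \<zeta> ^ E k" for \<zeta> :: complex and k
    unfolding monom_val_def E_def power_sum by (simp add: power_mult[symmetric] mult_ac)
  define Q where "Q \<zeta> = (\<Sum>k\<in>K. a k * \<zeta> ^ E k)" for \<zeta> :: complex
  have Qb: "cmod (Q \<zeta>) \<le> 1" if "cmod \<zeta> = 1" for \<zeta>
    using bd[of "\<lambda>i. \<zeta> ^ (N^(g i))"] that unfolding Q_def mon by (simp add: norm_power)
  define B where "B = Max (E ` K)"
  have EB: "E k \<le> B" if "k \<in> K" for k unfolding B_def using K that by simp
  define M where "M = 2*B+1"
  have M0: "M > 0" unfolding M_def by simp
  define z where "z j = cis (2 * pi * real j / real M)" for j :: nat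
  have zE: "z j ^ e = cis (2 * pi * real j * real e / real M)" for j e
    unfolding z_def Complex.DeMoivre by (simp add: mult_ac)
  have z1: "cmod (z j) = 1" for j unfolding z_def by simp
  have key: "(\<Sum>j<M. Q (z j) * cnj (Q (z j)) * cis (- (2 * pi * real j * real D / real M)))
      = of_nat M * (\<Sum>k\<in>K. \<Sum>k'\<in>K. if E k = E k' + D then a k * cnj (a k') else 0)"
    if DB: "D \<le> B" for D
  proof -
    define x where "x k k' = int (E k) - int (E k') - int D" for k k'
    have step1: "Q (z j) * cnj (Q (z j)) * cis (- (2 * pi * real j * real D / real M)) =
      (\<Sum>k\<in>K. \<Sum>k'\<in>K. a k * cnj (a k') * cis (2 * pi * real j * of_int (x k k') / real M))" for j
    proof -
      have "Q (z j) * cnj (Q (z j)) * cis (- (2 * pi * real j * real D / real M)) =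
        (\<Sum>k\<in>K. \<Sum>k'\<in>K. (a k * cis (2 * pi * real j * real (E k) / real M)) *
            (cnj (a k') * cis (- (2 * pi * real j * real (E k') / real M))) *
            cis (- (2 * pi * real j * real D / real M)))"
        unfolding Q_def zE cnj_sum complex_cnj_mult cis_cnj unfolding sum_product unfolding sum_distrib_right ..
      also have "\<dots> = (\<Sum>k\<in>K. \<Sum>k'\<in>K. a k * cnj (a k') * cis (2 * pi * real j * of_int (x k k') / real M))"
      proof (intro sum.cong refl)
        fix k k'
        have "(a k * cis (2 * pi * real j * real (E k) / real M)) *
            (cnj (a k') * cis (- (2 * pi * real j * real (E k') / real M))) *
            cis (- (2 * pi * real j * real D / real M)) =
            a k * cnj (a k') * (cis (2 * pi * real j * real (E k) / real M) *
            cis (- (2 * pi * real j * real (E k') / real M)) *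
            cis (- (2 * pi * real j * real D / real M)))" by (simp add: mult_ac)
        also have "cis (2 * pi * real j * real (E k) / real M) *
            cis (- (2 * pi * real j * real (E k') / real M)) *
            cis (- (2 * pi * real j * real D / real M)) =
            cis (2 * pi * real j * of_int (x k k') / real M)"
        proof -
          have ex: "real_of_int (x k k') = real (E k) - real (E k') - real D" unfolding x_def by simp
          have arg: "2 * pi * real j * real (E k) / real M + - (2 * pi * real j * real (E k') / real M)
              + - (2 * pi * real j * real D / real M) = 2 * pi * real j * of_int (x k k') / real M"
            unfolding ex by (simp add: algebra_simps diff_divide_distrib add_divide_distrib)
          show ?thesis unfolding cis_mult arg ..
        qed
        finally show "(a k * cis (2 * pi * real j * real (E k) / real M)) *
            (cnj (a k') * cis (- (2 * pi * real j * real (E k') / real M))) *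
            cis (- (2 * pi * real j * real D / real M)) =
            a k * cnj (a k') * cis (2 * pi * real j * of_int (x k k') / real M)" .
      qed
      finally show ?thesis .
    qed
    have xb: "\<bar>x k k'\<bar> < int M" if "k \<in> K" "k' \<in> K" for k k'
      using EB[OF that(1)] EB[OF that(2)] DB unfolding x_def M_def by linarith
    have x0: "(x k k' = 0) = (E k = E k' + D)" for k k' unfolding x_def by linarith
    have "(\<Sum>j<M. Q (z j) * cnj (Q (z j)) * cis (- (2 * pi * real j * real D / real M)))
       = (\<Sum>j<M. \<Sum>k\<in>K. \<Sum>k'\<in>K. a k * cnj (a k') * cis (2 * pi * real j * of_int (x k k') / real M))"
      using step1 by simp
    also have "\<dots> = (\<Sum>k\<in>K. \<Sum>k'\<in>K. a k * cnj (a k') * (\<Sum>j<M. cis (2 * pi * real j * of_int (x k k') / real M)))"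
      unfolding sum_distrib_left by (subst sum.swap) (subst (2) sum.swap, rule refl)
    also have "\<dots> = (\<Sum>k\<in>K. \<Sum>k'\<in>K. a k * cnj (a k') * (if E k = E k' + D then of_nat M else 0))"
      by (intro sum.cong refl) (simp add: char_sum[OF M0 xb] x0)
    also have "\<dots> = of_nat M * (\<Sum>k\<in>K. \<Sum>k'\<in>K. if E k = E k' + D then a k * cnj (a k') else 0)"
      unfolding sum_distrib_left by (intro sum.cong refl) auto
    finally show ?thesis .
  qed
  have "(\<Sum>k\<in>K. \<Sum>k'\<in>K. if E k = E k' + 0 then a k * cnj (a k') else 0) =
        (\<Sum>k\<in>K. \<Sum>k'\<in>K. if k' = k then a k * cnj (a k) else 0)"
    by (intro sum.cong refl) (use Einj in \<open>auto simp: inj_on_def\<close>)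
  also have "\<dots> = (\<Sum>k\<in>K. a k * cnj (a k))" using K by simp
  also have "\<dots> = (\<Sum>k\<in>K. complex_of_real ((cmod (a k))^2))"
    by (intro sum.cong refl) (rule complex_norm_square[symmetric])
  also have "\<dots> = 1" using norm1 by (metis of_real_1 of_real_sum)
  finally have s0: "(\<Sum>k\<in>K. \<Sum>k'\<in>K. if E k = E k' + 0 then a k * cnj (a k') else 0) = 1" .
  define r where "r j = (cmod (Q (z j)))^2" for j
  have rQ: "Q (z j) * cnj (Q (z j)) = of_real (r j)" for j
    unfolding r_def by (rule complex_norm_square[symmetric])
  have r1: "r j \<le> 1" for j unfolding r_def using Qb[OF z1] by (simp add: power_le_one)
  have "(\<Sum>j<M. complex_of_real (r j)) = of_nat M"
    using key[of 0] s0 rQ by simp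
  then have "(\<Sum>j<M. r j) = real M"
    by (metis of_real_eq_iff of_real_of_nat_eq of_real_sum)
  then have "(\<Sum>j<M. 1 - r j) = 0" by (simp add: sum_subtractf)
  then have rr: "r j = 1" if "j < M" for j
    using sum_nonneg_eq_0_iff[of "{..<M}" "\<lambda>j. 1 - r j"] r1 that by auto
  define T where "T = {k\<in>K. a k \<noteq> 0}"
  have T: "finite T" "T \<noteq> {}" "k \<in> T" "l \<in> T" using K kl unfolding T_def by auto
  have "Max (E ` T) \<in> E ` T" using T by (intro Max_in) auto
  then obtain kx where kx: "kx \<in> T" "E kx = Max (E ` T)" by (metis imageE)
  have "Min (E ` T) \<in> E ` T" using T by (intro Min_in) auto
  then obtain kn where kn: "kn \<in> T" "E kn = Min (E ` T)" by (metis imageE)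
  have lex: "E k' \<le> E kx" if "k' \<in> T" for k' using kx T that by simp
  have gen: "E kn \<le> E k'" if "k' \<in> T" for k' using kn T that by simp
  have TK: "T \<subseteq> K" unfolding T_def by auto
  have "E k \<noteq> E l" using Einj kl unfolding inj_on_def by blast
  then have Dpos: "E kn < E kx" using lex[OF T(3)] lex[OF T(4)] gen[OF T(3)] gen[OF T(4)] by linarith
  define D where "D = E kx - E kn"
  have DB: "D \<le> B" unfolding D_def using EB[of kx] kx TK by auto
  have "(\<Sum>k\<in>K. \<Sum>k'\<in>K. if E k = E k' + D then a k * cnj (a k') else 0) =
        (\<Sum>k\<in>K. \<Sum>k'\<in>K. if k = kx then (if k' = kn then a kx * cnj (a kn) else 0) else 0)"
  proof (intro sum.cong refl)
    fix k k' assume k: "k \<in> K" and k': "k' \<in> K"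
    show "(if E k = E k' + D then a k * cnj (a k') else 0) =
          (if k = kx then (if k' = kn then a kx * cnj (a kn) else 0) else 0)"
    proof (cases "a k \<noteq> 0 \<and> a k' \<noteq> 0")
      case True
      then have kT: "k \<in> T" "k' \<in> T" using k k' unfolding T_def by auto
      have "E k = E k' + D \<longleftrightarrow> E k = E kx \<and> E k' = E kn"
        using lex[OF kT(1)] gen[OF kT(2)] Dpos unfolding D_def by linarith
      also have "\<dots> \<longleftrightarrow> k = kx \<and> k' = kn"
        using Einj k k' kx(1) kn(1) TK unfolding inj_on_def by blast
      finally show ?thesis by auto
    next
      case False
      then show ?thesis using kx(1) kn(1) unfolding T_def by auto
    qed
  qed
  also have "\<dots> = (\<Sum>k\<in>K. if k = kx then (\<Sum>k'\<in>K. if k' = kn then a kx * cnj (a kn) else 0) else 0)"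
    by (intro sum.cong refl) auto
  also have "\<dots> = a kx * cnj (a kn)"
  proof -
    have "kx \<in> K" "kn \<in> K" using kx(1) kn(1) TK by auto
    then show ?thesis using K by simp
  qed
  finally have sD: "(\<Sum>k\<in>K. \<Sum>k'\<in>K. if E k = E k' + D then a k * cnj (a k') else 0) = a kx * cnj (a kn)" .
  have "(\<Sum>j<M. Q (z j) * cnj (Q (z j)) * cis (- (2 * pi * real j * real D / real M))) =
        (\<Sum>j<M. cis (2 * pi * real j * of_int (- int D) / real M))"
    by (intro sum.cong refl) (simp add: rQ rr)
  also have "\<dots> = 0"
    using char_sum[OF M0, of "- int D"] Dpos DB unfolding D_def M_def by simp
  finally have "of_nat M * (a kx * cnj (a kn)) = 0" using key[OF DB] sD by simp
  then show False using M0 kx(1) kn(1) unfolding T_def by simp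
qed


theorem corollary3p3:
  fixes a :: "('n::finite \<Rightarrow> nat) \<Rightarrow> complex" and m :: nat
  assumes "CARD('n) > 1"
    and "a \<in> Hhom m"
    and "h2norm_poly m a = 1"
    and "k \<noteq> l" and "a k \<noteq> 0" and "a l \<noteq> 0"
  shows "\<not> (\<exists>c. schur_class c \<and> same_compression m a c)"
proof
  assume "\<exists>c. schur_class c \<and> same_compression m a c"
  then obtain c where sc: "schur_class c" and same: "same_compression m a c" by blast
  have ah: "a j = 0" if "mdeg j \<noteq> m" for j using assms(2) that unfolding Hhom_def by auto
  have cq: "c j = a j" if "mdeg j \<le> m" for j using coef_eq[OF same that] .
  have c0: "c j = 0" if "mdeg j < m" for j using cq[of j] ah[of j] that by auto
  define K where "K = {j::'n \<Rightarrow> nat. mdeg j \<le> m}"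
  have K: "finite K" unfolding K_def by (rule finite_mdeg_le)
  have Kb: "j i \<le> m" if "j \<in> K" for j i
    using that le_mdeg[of j i] unfolding K_def by auto
  have norm1: "(\<Sum>j\<in>K. (cmod (a j))^2) = 1"
    using assms(3) unfolding h2norm_poly_def K_def by simp
  have "mdeg k = m" "mdeg l = m" using ah assms(5,6) by auto
  then have kK: "k \<in> K" "l \<in> K" unfolding K_def by auto
  have bd: "cmod (\<Sum>j\<in>K. a j * monom_val w j) \<le> 1" if w: "\<forall>i. cmod (w i) = 1" for w
  proof -
    have "(\<Sum>j\<in>K. a j * monom_val w j) = (\<Sum>j\<in>{j. mdeg j = m}. c j * monom_val w j)"
      by (rule sum.mono_neutral_cong_right) (use K ah cq in \<open>auto simp: K_def\<close>)
    also have "cmod \<dots> \<le> 1" using slice_bound[OF sc c0] w by blast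
    finally show ?thesis .
  qed
  show False
  proof (rule no_unimodular[where a = a and K = K and m = m and k = k and l = l])
    show "finite K" by (rule K)
    show "\<And>j i. j \<in> K \<Longrightarrow> j i \<le> m" by (fact Kb)
    show "(\<Sum>j\<in>K. (cmod (a j))^2) = 1" by (rule norm1)
    show "k \<in> K" "l \<in> K" by (rule kK(1), rule kK(2))
    show "k \<noteq> l" "a k \<noteq> 0" "a l \<noteq> 0" by (rule assms(4), rule assms(5), rule assms(6))
    show "\<And>w. \<forall>i. cmod (w i) = 1 \<Longrightarrow> cmod (\<Sum>j\<in>K. a j * monom_val w j) \<le> 1"
      by (fact bd)
  qed
qed

end
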